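(* Let $\Delta:A\to A$ be a weak-2-local derivation on a C$^*$-algebra $A$. Suppose $p$ is a projection in $A$ and $b\in A$ satisfies $pb=bp=0$. Then $p\Delta(a+b)p=p\Delta(a)p$ for every $a\in A$. In particular, $p\Delta(a)p=p\Delta(a-(1-p)a(1-p))p$ for every $a\in A$.
   Context: Here $(1-p)a(1-p)=a-pa-ap+pap$ (computed in the unitization if $A$ is non-unital). A derivation on $A$ is a linear map $D:A\to A$ with $D(ab)=D(a)b+aD(b)$. A (not necessarily linear) map $\Delta:A\to A$ is a weak-2-local derivation if for every $a,b\in A$ and every $\phi\in A^*$ there exists a derivation $D_{a,b,\phi}:A\to A$ such that $\phi\Delta(a)=\phi D_{a,b,\phi}(a)$ and $\phi\Delta(b)=\phi D_{a,b,\phi}(b)$. *)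

theory Defs
  imports "HOL-Analysis.Analysis"
begin

text \<open>A (not necessarily unital) complex C*-algebra: a real Banach algebra
 with a compatible complex scalar multiplication and an involution satisfying
 the C*-identity.\<close>

class cstar_algebra = real_normed_algebra + banach +
  fixes scaleC :: "complex \<Rightarrow> 'a \<Rightarrow> 'a"
    and cstar :: "'a \<Rightarrow> 'a"
  assumes scaleC_add_left: "scaleC (c + d) x = scaleC c x + scaleC d x"
    and scaleC_add_right: "scaleC c (x + y) = scaleC c x + scaleC c y"
    and scaleC_scaleC: "scaleC c (scaleC d x) = scaleC (c * d) x"
    and scaleC_one: "scaleC 1 x = x"
    and scaleC_of_real: "scaleC (of_real r) x = scaleR r x"
    and scaleC_mult_left: "scaleC c (x * y) = scaleC c x * y"
    and scaleC_mult_right: "scaleC c (x * y) = x * scaleC c y"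
    and norm_scaleC: "norm (scaleC c x) = cmod c * norm x"
    and cstar_add: "cstar (x + y) = cstar x + cstar y"
    and cstar_scaleC: "cstar (scaleC c x) = scaleC (cnj c) (cstar x)"
    and cstar_mult: "cstar (x * y) = cstar y * cstar x"
    and cstar_cstar: "cstar (cstar x) = x"
    and cstar_identity: "norm (cstar x * x) = (norm x)\<^sup>2"

definition projection :: "'a::cstar_algebra \<Rightarrow> bool" where
  "projection p \<longleftrightarrow> cstar p = p \<and> p * p = p"

definition dual_functional :: "('a::cstar_algebra \<Rightarrow> complex) \<Rightarrow> bool" where
  "dual_functional \<phi> \<longleftrightarrow>
     (\<forall>x y. \<phi> (x + y) = \<phi> x + \<phi> y) \<and>
     (\<forall>c x. \<phi> (scaleC c x) = c * \<phi> x) \<and>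
     (\<exists>K. \<forall>x. cmod (\<phi> x) \<le> K * norm x)"

definition derivation :: "('a::cstar_algebra \<Rightarrow> 'a) \<Rightarrow> bool" where
  "derivation D \<longleftrightarrow>
     (\<forall>x y. D (x + y) = D x + D y) \<and>
     (\<forall>c x. D (scaleC c x) = scaleC c (D x)) \<and>
     (\<forall>a b. D (a * b) = D a * b + a * D b)"

definition weak_2_local_derivation :: "('a::cstar_algebra \<Rightarrow> 'a) \<Rightarrow> bool" where
  "weak_2_local_derivation \<Delta> \<longleftrightarrow>
     (\<forall>a b \<phi>. dual_functional \<phi> \<longrightarrow>
        (\<exists>D. derivation D \<and> \<phi> (\<Delta> a) = \<phi> (D a) \<and> \<phi> (\<Delta> b) = \<phi> (D b)))"

end

theory Submission
  imports Defs
begin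

definition HBgraph :: "'a::real_normed_vector \<Rightarrow> ('a \<times> real) set \<Rightarrow> bool" where
 "HBgraph x0 G \<longleftrightarrow> (x0, norm x0) \<in> G \<and> (\<forall>x u v. (x,u)\<in>G \<longrightarrow> (x,v)\<in>G \<longrightarrow> u=v)
   \<and> (\<forall>x u y v. (x,u)\<in>G \<longrightarrow> (y,v)\<in>G \<longrightarrow> (x+y,u+v)\<in>G)
   \<and> (\<forall>x u c. (x,u)\<in>G \<longrightarrow> (scaleR c x, c*u)\<in>G) \<and> (\<forall>x u. (x,u)\<in>G \<longrightarrow> u \<le> norm x)"

lemma HB_extend:
  fixes z :: "'a::real_normed_vector"
  assumes H: "HBgraph x0 G" and zn: "z \<notin> fst ` G"
  shows "\<exists>G'. HBgraph x0 G' \<and> G \<subset> G'"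
proof -
  have fn: "\<And>x u v. (x,u)\<in>G \<Longrightarrow> (x,v)\<in>G \<Longrightarrow> u=v"
   and add: "\<And>x u y v. (x,u)\<in>G \<Longrightarrow> (y,v)\<in>G \<Longrightarrow> (x+y,u+v)\<in>G"
   and scl: "\<And>x u c. (x,u)\<in>G \<Longrightarrow> (scaleR c x, c*u)\<in>G"
   and bnd: "\<And>x u. (x,u)\<in>G \<Longrightarrow> u \<le> norm x"
   and x0G: "(x0, norm x0) \<in> G"
    using H unfolding HBgraph_def by blast+
  have zero: "(0,0) \<in> G" using scl[OF x0G, of 0] by simp
  define S where "S = {v - norm (y - z) | y v. (y,v)\<in>G}"
  define c where "c = Sup S"
  have key: "v - norm (y - z) \<le> norm (x + z) - u" if "(x,u)\<in>G" "(y,v)\<in>G" for x u y v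
  proof -
    have "u + v \<le> norm (x + y)" using bnd[OF add[OF that]] .
    also have "x + y = (x + z) + (y - z)" by simp
    also have "norm ((x + z) + (y - z)) \<le> norm (x + z) + norm (y - z)" by (rule norm_triangle_ineq)
    finally show ?thesis by simp
  qed
  have Sne: "S \<noteq> {}" using zero unfolding S_def by blast
  have Sbdd: "bdd_above S" unfolding S_def bdd_above_def using key zero by blast
  have c_lo: "v - norm (y - z) \<le> c" if "(y,v)\<in>G" for y v
    unfolding c_def by (rule cSup_upper[OF _ Sbdd]) (use that S_def in blast)
  have c_hi: "c \<le> norm (x + z) - u" if "(x,u)\<in>G" for x u
    unfolding c_def by (rule cSup_least[OF Sne]) (use that key S_def in blast)
  define G' where "G' = {(x + t *\<^sub>R z, u + t*c) | x u t. (x,u)\<in>G}"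
  have mem: "(x + t *\<^sub>R z, u + t*c) \<in> G'" if "(x,u)\<in>G" for x u t
    unfolding G'_def using that by blast
  have bnd': "u + t*c \<le> norm (x + t *\<^sub>R z)" if xu: "(x,u)\<in>G" for x u t
  proof (cases "t > 0")
    case True
    have "c \<le> norm ((1/t) *\<^sub>R x + z) - (1/t)*u" using c_hi[OF scl[OF xu, of "1/t"]] .
    hence "t*c \<le> t * (norm ((1/t) *\<^sub>R x + z) - (1/t)*u)" using True
      by (simp add: mult_left_mono)
    also have "t * (norm ((1/t) *\<^sub>R x + z) - (1/t)*u) = t * norm ((1/t) *\<^sub>R x + z) - u"
      using True by (simp add: right_diff_distrib)
    also have "t * norm ((1/t) *\<^sub>R x + z) = norm (t *\<^sub>R ((1/t) *\<^sub>R x + z))" using True by simp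
    also have "t *\<^sub>R ((1/t) *\<^sub>R x + z) = x + t *\<^sub>R z" using True by (simp add: scaleR_add_right)
    finally show ?thesis by simp
  next
    case False
    show ?thesis
    proof (cases "t = 0")
      case True then show ?thesis using bnd[OF xu] by simp
    next
      case False
      define s where "s = - t"
      have s: "s > 0" using False \<open>\<not> t > 0\<close> s_def by simp
      have "(1/s)*u - norm ((1/s) *\<^sub>R x - z) \<le> c" using c_lo[OF scl[OF xu, of "1/s"]] .
      hence "s * ((1/s)*u - norm ((1/s) *\<^sub>R x - z)) \<le> s*c" using s
        by (simp add: mult_left_mono)
      hence "u - s * norm ((1/s) *\<^sub>R x - z) \<le> s*c" using s
        by (simp add: right_diff_distrib)
      also have "s * norm ((1/s) *\<^sub>R x - z) = norm (s *\<^sub>R ((1/s) *\<^sub>R x - z))" using s by simp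
      also have "s *\<^sub>R ((1/s) *\<^sub>R x - z) = x + t *\<^sub>R z" using s by (simp add: s_def scaleR_diff_right)
      finally show ?thesis by (simp add: s_def)
    qed
  qed
  have "HBgraph x0 G'"
    unfolding HBgraph_def
  proof (intro conjI allI impI)
    show "(x0, norm x0) \<in> G'" using mem[OF x0G, of 0] by simp
  next
    fix w u v assume "(w,u)\<in>G'" "(w,v)\<in>G'"
    then obtain x u1 t y v1 s where e1: "w = x + t *\<^sub>R z" "u = u1 + t*c" "(x,u1)\<in>G"
      and e2: "w = y + s *\<^sub>R z" "v = v1 + s*c" "(y,v1)\<in>G" unfolding G'_def by blast
    show "u = v"
    proof (cases "t = s")
      case True
      then have "x = y" using e1 e2 by simp
      then show ?thesis using fn e1 e2 True by simp
    next
      case False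
      have d: "(x + (-1) *\<^sub>R y, u1 + (-1) * v1) \<in> G" using add[OF e1(3) scl[OF e2(3)]] .
      have "x - y = (s - t) *\<^sub>R z" using e1 e2 by (simp add: algebra_simps)
      hence "z = (1/(s-t)) *\<^sub>R (x - y)" using False by simp
      hence "(z, (1/(s-t))*(u1 - v1)) \<in> G" using scl[OF d, of "1/(s-t)"] by simp
      hence "z \<in> fst ` G" by force
      with zn show ?thesis by blast
    qed
  next
    fix w u w' v assume "(w,u)\<in>G'" "(w',v)\<in>G'"
    then obtain x u1 t y v1 s where e1: "w = x + t *\<^sub>R z" "u = u1 + t*c" "(x,u1)\<in>G"
      and e2: "w' = y + s *\<^sub>R z" "v = v1 + s*c" "(y,v1)\<in>G" unfolding G'_def by blast
    have "(x + y + (t+s) *\<^sub>R z, u1 + v1 + (t+s)*c) \<in> G'" using mem[OF add[OF e1(3) e2(3)]] .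
    thus "(w + w', u + v) \<in> G'" using e1 e2 by (simp add: algebra_simps)
  next
    fix w u d assume "(w,u)\<in>G'"
    then obtain x u1 t where e1: "w = x + t *\<^sub>R z" "u = u1 + t*c" "(x,u1)\<in>G"
      unfolding G'_def by blast
    have "(d *\<^sub>R x + (d*t) *\<^sub>R z, d*u1 + (d*t)*c) \<in> G'" using mem[OF scl[OF e1(3)]] .
    thus "(d *\<^sub>R w, d*u) \<in> G'" using e1 by (simp add: algebra_simps)
  next
    fix w u assume "(w,u)\<in>G'"
    then obtain x u1 t where e1: "w = x + t *\<^sub>R z" "u = u1 + t*c" "(x,u1)\<in>G"
      unfolding G'_def by blast
    thus "u \<le> norm w" using bnd' by simp
  qed
  moreover have "G \<subseteq> G'" using mem[of _ _ 0] by force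
  moreover have "(z, c) \<in> G'" using mem[OF zero, of 1] by simp
  moreover have "(z, c) \<notin> G" using zn by force
  ultimately show ?thesis by blast
qed


lemma real_HB:
  fixes x0 :: "'a::real_normed_vector"
  assumes x0: "x0 \<noteq> 0"
  shows "\<exists>f. (\<forall>x y. f (x+y) = f x + f y) \<and> (\<forall>c x. f (c *\<^sub>R x) = c * f x)
            \<and> (\<forall>x. \<bar>f x\<bar> \<le> norm x) \<and> f x0 = norm x0"
proof -
  define A where "A = {G. HBgraph x0 G}"
  define G0 where "G0 = {(c *\<^sub>R x0, c * norm x0) | c. True}"
  have G0A: "G0 \<in> A" unfolding A_def HBgraph_def
  proof (intro CollectI conjI allI impI)
    show "(x0, norm x0) \<in> G0" unfolding G0_def by (rule CollectI, rule exI[of _ 1]) simp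
  next
    fix x u v assume "(x,u)\<in>G0" "(x,v)\<in>G0"
    then obtain c d where "x = c *\<^sub>R x0" "u = c * norm x0" "x = d *\<^sub>R x0" "v = d * norm x0"
      unfolding G0_def by blast
    then show "u = v" using x0 by (metis scaleR_cancel_right)
  next
    fix x u y v assume "(x,u)\<in>G0" "(y,v)\<in>G0"
    then obtain c d where "x = c *\<^sub>R x0" "u = c * norm x0" "y = d *\<^sub>R x0" "v = d * norm x0"
      unfolding G0_def by blast
    then show "(x+y, u+v)\<in>G0" unfolding G0_def
      by (intro CollectI exI[of _ "c+d"]) (simp add: scaleR_add_left distrib_right)
  next
    fix x u e assume "(x,u)\<in>G0"
    then obtain c where "x = c *\<^sub>R x0" "u = c * norm x0" unfolding G0_def by blast
    then show "(e *\<^sub>R x, e*u)\<in>G0" unfolding G0_def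
      by (intro CollectI exI[of _ "e*c"]) simp
  next
    fix x u assume "(x,u)\<in>G0"
    then obtain c where "x = c *\<^sub>R x0" "u = c * norm x0" unfolding G0_def by blast
    then show "u \<le> norm x" by (simp add: mult_right_mono)
  qed
  have "\<forall>C\<in>chains A. \<exists>U\<in>A. \<forall>X\<in>C. X \<subseteq> U"
  proof
    fix C assume C: "C \<in> chains A"
    show "\<exists>U\<in>A. \<forall>X\<in>C. X \<subseteq> U"
    proof (cases "C = {}")
      case True then show ?thesis using G0A by blast
    next
      case False
      have CA: "C \<subseteq> A" and ch: "\<And>X Y. X\<in>C \<Longrightarrow> Y\<in>C \<Longrightarrow> X \<subseteq> Y \<or> Y \<subseteq> X"
        using C unfolding chains_def chain_subset_def by auto
      have HC: "\<And>X. X\<in>C \<Longrightarrow> HBgraph x0 X" using CA A_def by blast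
      have two: "\<exists>Z\<in>C. p \<in> Z \<and> q \<in> Z" if pq: "p \<in> \<Union>C" "q \<in> \<Union>C" for p q
      proof -
        obtain X Y where "X\<in>C" "Y\<in>C" "p\<in>X" "q\<in>Y" using pq by blast
        then show ?thesis using ch[of X Y] by blast
      qed
      have "HBgraph x0 (\<Union>C)" unfolding HBgraph_def
      proof (intro conjI allI impI)
        obtain X where "X \<in> C" using False by blast
        then show "(x0, norm x0) \<in> \<Union>C" using HC unfolding HBgraph_def by blast
      next
        fix x u v assume "(x,u)\<in>\<Union>C" "(x,v)\<in>\<Union>C"
        then obtain Z where "Z\<in>C" "(x,u)\<in>Z" "(x,v)\<in>Z" using two by blast
        then show "u = v" using HC unfolding HBgraph_def by blast
      next
        fix x u y v assume "(x,u)\<in>\<Union>C" "(y,v)\<in>\<Union>C"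
        then obtain Z where "Z\<in>C" "(x,u)\<in>Z" "(y,v)\<in>Z" using two by blast
        then show "(x+y,u+v)\<in>\<Union>C" using HC unfolding HBgraph_def by blast
      next
        fix x u e assume "(x,u)\<in>\<Union>C"
        then obtain Z where "Z\<in>C" "(x,u)\<in>Z" by blast
        then show "(e *\<^sub>R x, e*u)\<in>\<Union>C" using HC unfolding HBgraph_def by blast
      next
        fix x u assume "(x,u)\<in>\<Union>C"
        then obtain Z where "Z\<in>C" "(x,u)\<in>Z" by blast
        then show "u \<le> norm x" using HC unfolding HBgraph_def by blast
      qed
      then show ?thesis unfolding A_def by blast
    qed
  qed
  from Zorn_Lemma2[OF this] obtain M where MA: "M \<in> A" and Mmax0: "\<forall>X\<in>A. M \<subseteq> X \<longrightarrow> X = M"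
    by (elim bexE)
  have Mmax: "\<And>X. X\<in>A \<Longrightarrow> M \<subseteq> X \<Longrightarrow> X = M" using Mmax0 by blast
  have HM: "HBgraph x0 M" using MA A_def by blast
  have dom: "\<exists>u. (y,u)\<in>M" for y
  proof (rule ccontr)
    assume "\<not> (\<exists>u. (y,u)\<in>M)"
    hence "y \<notin> fst ` M" by force
    then obtain G' where "HBgraph x0 G'" "M \<subset> G'" using HB_extend[OF HM] by blast
    then have "G' \<in> A" "M \<subseteq> G'" "G' \<noteq> M" unfolding A_def by auto
    then show False using Mmax[of G'] by simp
  qed
  have fn: "\<And>x u v. (x,u)\<in>M \<Longrightarrow> (x,v)\<in>M \<Longrightarrow> u=v"
   and add: "\<And>x u y v. (x,u)\<in>M \<Longrightarrow> (y,v)\<in>M \<Longrightarrow> (x+y,u+v)\<in>M"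
   and scl: "\<And>x u c. (x,u)\<in>M \<Longrightarrow> (scaleR c x, c*u)\<in>M"
   and bnd: "\<And>x u. (x,u)\<in>M \<Longrightarrow> u \<le> norm x"
   and x0G: "(x0, norm x0) \<in> M"
    using HM unfolding HBgraph_def by blast+
  define f where "f y = (THE u. (y,u)\<in>M)" for y
  have fM: "(y, f y) \<in> M" for y
  proof -
    obtain u where "(y,u)\<in>M" using dom by blast
    then show ?thesis unfolding f_def by (rule theI) (use fn \<open>(y,u)\<in>M\<close> in blast)
  qed
  have fe: "f y = u" if "(y,u)\<in>M" for y u using fn[OF fM that] .
  have lin1: "f (x+y) = f x + f y" for x y using fe[OF add[OF fM fM]] .
  have lin2: "f (c *\<^sub>R x) = c * f x" for c x using fe[OF scl[OF fM]] .
  have "\<bar>f x\<bar> \<le> norm x" for x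
  proof -
    have "f x \<le> norm x" using bnd[OF fM] .
    moreover have "f ((-1) *\<^sub>R x) \<le> norm ((-1) *\<^sub>R x)" using bnd[OF fM] .
    hence "- f x \<le> norm x" using lin2[of "-1" x] by simp
    ultimately show ?thesis by simp
  qed
  moreover have "f x0 = norm x0" using fe[OF x0G] .
  ultimately show ?thesis using lin1 lin2 by blast
qed

lemma complex_HB:
  fixes x :: "'a::cstar_algebra"
  assumes "x \<noteq> 0"
  shows "\<exists>\<phi>. dual_functional \<phi> \<and> \<phi> x \<noteq> 0"
proof -
  obtain f where add: "\<And>x y. f (x+y) = f x + f y" and scl: "\<And>c x. f (c *\<^sub>R x) = c * f x"
    and bnd: "\<And>x. \<bar>f x\<bar> \<le> norm x" and fx: "f x = norm x"
    using real_HB[OF assms] by blast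
  define \<phi> where "\<phi> y = complex_of_real (f y) - \<i> * complex_of_real (f (scaleC \<i> y))" for y
  have dec: "scaleC c y = Re c *\<^sub>R y + Im c *\<^sub>R scaleC \<i> y" for c and y :: 'a
  proof -
    have "c = complex_of_real (Re c) + complex_of_real (Im c) * \<i>" by (simp add: complex_eq_iff)
    hence "scaleC c y = scaleC (complex_of_real (Re c)) y + scaleC (complex_of_real (Im c) * \<i>) y"
      by (metis scaleC_add_left)
    also have "\<dots> = Re c *\<^sub>R y + Im c *\<^sub>R scaleC \<i> y"
      by (simp add: scaleC_of_real flip: scaleC_scaleC)
    finally show ?thesis .
  qed
  have fsub: "f (u - v) = f u - f v" for u v using add[of v "u - v"] by simp
  have "dual_functional \<phi>" unfolding dual_functional_def
  proof (intro conjI allI)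
    fix y z show "\<phi> (y + z) = \<phi> y + \<phi> z" unfolding \<phi>_def by (simp add: scaleC_add_right add algebra_simps)
  next
    fix c y
    have e1: "f (scaleC c y) = Re c * f y + Im c * f (scaleC \<i> y)" by (subst dec) (simp only: add scl)
    have "f (scaleC \<i> (scaleC c y)) = f (scaleC (\<i> * c) y)" by (simp add: scaleC_scaleC)
    also have "\<dots> = - Im c * f y + Re c * f (scaleC \<i> y)" by (subst dec) (simp only: add scl, simp)
    finally have e2: "f (scaleC \<i> (scaleC c y)) = - Im c * f y + Re c * f (scaleC \<i> y)" .
    show "\<phi> (scaleC c y) = c * \<phi> y" unfolding \<phi>_def e1 e2
      by (simp add: complex_eq_iff algebra_simps)
  next
    show "\<exists>K. \<forall>y. cmod (\<phi> y) \<le> K * norm y"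
    proof (intro exI allI)
      fix y
      have "cmod (\<phi> y) \<le> cmod (complex_of_real (f y)) + cmod (\<i> * complex_of_real (f (scaleC \<i> y)))"
        unfolding \<phi>_def by (rule norm_triangle_ineq4)
      also have "\<dots> = \<bar>f y\<bar> + \<bar>f (scaleC \<i> y)\<bar>" by (simp add: norm_mult)
      also have "\<dots> \<le> norm y + norm (scaleC \<i> y)" using bnd by (intro add_mono)
      also have "\<dots> = 2 * norm y" by (simp add: norm_scaleC)
      finally show "cmod (\<phi> y) \<le> 2 * norm y" .
    qed
  qed
  moreover have "Re (\<phi> x) = norm x" unfolding \<phi>_def by (simp add: fx)
  hence "\<phi> x \<noteq> 0" using assms by auto
  ultimately show ?thesis by blast
qed

lemma part1:
  fixes \<Delta> :: "'a::cstar_algebra \<Rightarrow> 'a" and p b :: 'a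
  assumes W: "weak_2_local_derivation \<Delta>"
    and pb: "p * b = 0" and bp: "b * p = 0"
  shows "p * \<Delta> (a + b) * p = p * \<Delta> a * p"
proof (rule ccontr)
  define x where "x = p * \<Delta> (a + b) * p - p * \<Delta> a * p"
  assume "\<not> ?thesis"
  hence "x \<noteq> 0" unfolding x_def by simp
  then obtain \<phi> where D\<phi>: "dual_functional \<phi>" and nz: "\<phi> x \<noteq> 0" using complex_HB by blast
  have padd: "\<And>y z. \<phi> (y + z) = \<phi> y + \<phi> z" and pscl: "\<And>c y. \<phi> (scaleC c y) = c * \<phi> y"
    using D\<phi> unfolding dual_functional_def by blast+
  obtain K where K: "\<And>y. cmod (\<phi> y) \<le> K * norm y" using D\<phi> unfolding dual_functional_def by blast
  define \<psi> where "\<psi> y = \<phi> (p * y * p)" for y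
  have "dual_functional \<psi>" unfolding dual_functional_def
  proof (intro conjI allI)
    fix y z show "\<psi> (y + z) = \<psi> y + \<psi> z" unfolding \<psi>_def by (simp add: distrib_left distrib_right padd)
  next
    fix c y show "\<psi> (scaleC c y) = c * \<psi> y" unfolding \<psi>_def
      by (simp add: pscl flip: scaleC_mult_left scaleC_mult_right)
  next
    show "\<exists>K. \<forall>y. cmod (\<psi> y) \<le> K * norm y"
    proof (intro exI allI)
      fix y
      have "cmod (\<psi> y) \<le> K * norm (p * y * p)" unfolding \<psi>_def by (rule K)
      also have "\<dots> \<le> max K 0 * norm (p * y * p)" by (simp add: mult_right_mono)
      also have "\<dots> \<le> max K 0 * (norm p * norm y * norm p)"
      proof (rule mult_left_mono)
        have "norm (p * y * p) \<le> norm (p * y) * norm p" by (rule norm_mult_ineq)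
        also have "\<dots> \<le> norm p * norm y * norm p" by (simp add: mult_right_mono norm_mult_ineq)
        finally show "norm (p * y * p) \<le> norm p * norm y * norm p" .
      qed simp
      finally show "cmod (\<psi> y) \<le> (max K 0 * norm p * norm p) * norm y" by (simp add: algebra_simps)
    qed
  qed
  then obtain D where D: "derivation D" and e1: "\<psi> (\<Delta> (a+b)) = \<psi> (D (a+b))"
    and e2: "\<psi> (\<Delta> a) = \<psi> (D a)" using W unfolding weak_2_local_derivation_def by blast
  have Dadd: "\<And>x y. D (x+y) = D x + D y" and Dm: "\<And>x y. D (x*y) = D x * y + x * D y"
    using D unfolding derivation_def by blast+
  have D0: "D 0 = 0" using Dadd[of 0 0] by simp
  have "D p * b + p * D b = 0" using Dm[of p b] pb D0 by simp
  hence "p * D b = - (D p * b)" by (simp add: eq_neg_iff_add_eq_0 add.commute)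
  hence "p * D b * p = 0" by (simp add: mult.assoc bp)
  hence pD: "p * D (a+b) * p = p * D a * p" by (simp add: Dadd distrib_left distrib_right)
  have phisub: "\<phi> (u - v) = \<phi> u - \<phi> v" for u v
    using padd[of v "u - v"] by simp
  have "\<phi> x = \<psi> (\<Delta> (a+b)) - \<psi> (\<Delta> a)" unfolding x_def \<psi>_def by (rule phisub)
  also have "\<dots> = \<psi> (D (a+b)) - \<psi> (D a)" by (simp only: e1 e2)
  also have "\<dots> = 0" by (simp only: \<psi>_def pD) simp
  finally show False using nz by simp
qed

theorem lemma3p2:
  fixes \<Delta> :: "'a::cstar_algebra \<Rightarrow> 'a" and p b :: 'a
  assumes "weak_2_local_derivation \<Delta>"
    and "projection p"
    and "p * b = 0" and "b * p = 0"
  shows "(\<forall>a. p * \<Delta> (a + b) * p = p * \<Delta> a * p) \<and>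
         (\<forall>a. p * \<Delta> a * p = p * \<Delta> (a - (a - p * a - a * p + p * a * p)) * p)"
proof (intro conjI allI)
  fix a show "p * \<Delta> (a + b) * p = p * \<Delta> a * p" using part1[OF assms(1,3,4)] .
next
  fix a
  define b' where "b' = a - p * a - a * p + p * a * p"
  have pp: "p * p = p" using assms(2) unfolding projection_def by blast
  have pp2: "p * (p * y) = p * y" for y by (simp flip: mult.assoc add: pp)
  have pp3: "y * p * p = y * p" for y by (simp add: mult.assoc pp)
  have "p * b' = 0" unfolding b'_def by (simp add: right_diff_distrib distrib_left mult.assoc pp2)
  moreover have "b' * p = 0" unfolding b'_def by (simp add: left_diff_distrib distrib_right mult.assoc pp)
  ultimately have "p * \<Delta> ((a - b') + b') * p = p * \<Delta> (a - b') * p" using part1[OF assms(1)] by blast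
  then show "p * \<Delta> a * p = p * \<Delta> (a - (a - p * a - a * p + p * a * p)) * p"
    unfolding b'_def by simp
qed

end
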